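(* Suppose the information $\sigma$-algebra $\mathcal{F}_I$ contains no fading information, i.e. $\mathcal{F}_I\subseteq\sigma(\phi_1,\dots,\phi_T)$ (so that, conditionally on $\sigma(\mathcal{F}_I\cup\phi_i)$, the fading variables $(H^i_k)_k$ are i.i.d. with their original law). Then for each technology $i$, $$j_i:=\arg\sup_{j\ge1}\mathbb{E}\big[p_i(\mathrm{SINR}^{i,j}_0)\,\big|\,\mathcal{F}_I\big]=1,$$ so the optimal policy associates with the nearest base station of the chosen technology: $\pi^*_I(1)=j_{\pi^*_I(0)}=1$.
   Context: Network model: $T\ge1$ technologies; $\phi_i$ are independent homogeneous Poisson point processes on $\mathbb{R}^2$ of intensities $\lambda_i>0$; $r^i_j$ is the distance from the origin to the $j$-th nearest point of $\phi_i$. Base stations of technology $i$ transmit at power $P_i>0$; fading coefficients $H^i_j\ge0$ are i.i.d. over all $(i,j)$, independent of the point processes; $l_i$ is a non-increasing path-loss function (strictly decreasing $S_k=P_il_i(r^i_k)$ in $k$ is used), $N^i_0\ge0$; $\mathrm{SINR}^{i,j}_0=\dfrac{P_iH^i_jl_i(r^i_j)}{N^i_0+\sum_{k\ne j}P_iH^i_kl_i(r^i_k)}$. Each $p_i$ is non-decreasing. The optimal policy $\pi^*_I=(\pi^*_I(0),\pi^*_I(1))$ chooses the technology and base-station index maximizing $\mathbb{E}[p_i(\mathrm{SINR}^{i,j}_0)\mid\mathcal{F}_I]$ over $(i,j)$. *)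

theory Defs
  imports "HOL-Probability.Probability"
begin

(* A point process in the plane is represented by an enumeration X 1, X 2, ... of its points
   (index 0 is unused).  Its counting measure: *)
definition ppp_count :: "(nat \<Rightarrow> 'a \<Rightarrow> real^2) \<Rightarrow> (real^2) set \<Rightarrow> 'a \<Rightarrow> ennreal" where
  "ppp_count X A \<omega> = (\<Sum>k. indicator A (X (Suc k) \<omega>))"

definition hom_PPP :: "'a measure \<Rightarrow> real \<Rightarrow> (nat \<Rightarrow> 'a \<Rightarrow> real^2) \<Rightarrow> bool" where
  "hom_PPP M lam X \<longleftrightarrow> lam > 0 \<and> (\<forall>k\<ge>1. X k \<in> borel_measurable M) \<and>
     (\<forall>A\<in>sets borel. bounded A \<longrightarrow> (\<forall>n::nat.
        measure M {\<omega>\<in>space M. ppp_count X A \<omega> = of_nat n}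
          = (lam * measure lborel A) ^ n / fact n * exp (- (lam * measure lborel A)))) \<and>
     (\<forall>I (B :: nat \<Rightarrow> (real^2) set). finite I \<longrightarrow> (\<forall>t\<in>I. B t \<in> sets borel \<and> bounded (B t)) \<longrightarrow>
        disjoint_family_on B I \<longrightarrow>
        prob_space.indep_vars M (\<lambda>_. count_space UNIV) (\<lambda>t. ppp_count X (B t)) I)"

definition point_sigma :: "'a measure \<Rightarrow> nat \<Rightarrow> (nat \<Rightarrow> nat \<Rightarrow> 'a \<Rightarrow> real^2) \<Rightarrow> 'a measure" where
  "point_sigma M T X = sigma (space M)
     (\<Union>i\<in>{..<T}. \<Union>k\<in>{1..}. {X i k -` A \<inter> space M | A. A \<in> sets borel})"

definition fading_sigma :: "'a measure \<Rightarrow> nat \<Rightarrow> (nat \<Rightarrow> nat \<Rightarrow> 'a \<Rightarrow> real) \<Rightarrow> 'a measure" where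
  "fading_sigma M T H = sigma (space M)
     (\<Union>i\<in>{..<T}. \<Union>k\<in>{1..}. {H i k -` A \<inter> space M | A. A \<in> sets borel})"

definition sinr :: "(nat \<Rightarrow> real) \<Rightarrow> (nat \<Rightarrow> real) \<Rightarrow> (nat \<Rightarrow> real \<Rightarrow> real) \<Rightarrow>
    (nat \<Rightarrow> nat \<Rightarrow> 'a \<Rightarrow> real) \<Rightarrow> (nat \<Rightarrow> nat \<Rightarrow> 'a \<Rightarrow> real^2) \<Rightarrow> nat \<Rightarrow> nat \<Rightarrow> 'a \<Rightarrow> ennreal" where
  "sinr P N0 l H X i j \<omega> =
     ennreal (P i * H i j \<omega> * l i (norm (X i j \<omega>))) /
     (ennreal (N0 i) + (\<Sum>k. if Suc k = j then 0
                              else ennreal (P i * H i (Suc k) \<omega> * l i (norm (X i (Suc k) \<omega>)))))"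

end

theory Submission
  imports Defs
begin


lemma mono_ennreal_borel:
  fixes f :: "ennreal \<Rightarrow> real"
  assumes "mono f"
  shows "f \<in> borel_measurable borel"
proof (subst borel_measurable_iff_le, intro allI)
  fix c
  define D where "D = {x. f x \<le> c}"
  define s where "s = Sup D"
  have down: "x \<in> D" if "y \<in> D" "x \<le> y" for x y
    using that assms by (auto simp: D_def mono_def intro: order_trans)
  have "D = {..<s} \<union> (if s \<in> D then {s} else {})"
  proof (intro equalityI subsetI)
    fix x assume "x \<in> D"
    then have "x \<le> s" unfolding s_def by (rule Sup_upper)
    then show "x \<in> {..<s} \<union> (if s \<in> D then {s} else {})"
      using \<open>x \<in> D\<close> by (cases "x = s") auto
  next
    fix x assume x: "x \<in> {..<s} \<union> (if s \<in> D then {s} else {})"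
    show "x \<in> D"
    proof (cases "x < s")
      case True
      then obtain y where "y \<in> D" "x < y" unfolding s_def using less_Sup_iff by blast
      then show ?thesis using down by auto
    next
      case False then show ?thesis using x by (auto split: if_splits)
    qed
  qed
  moreover have "{..<s} \<union> (if s \<in> D then {s} else {}) \<in> sets borel" by auto
  ultimately show "{w \<in> space borel. f w \<le> c} \<in> sets borel" by (simp add: D_def)
qed



definition gfun :: "real \<Rightarrow> real \<Rightarrow> (real \<Rightarrow> real) \<Rightarrow> nat \<Rightarrow> (nat \<Rightarrow> real^2) \<Rightarrow> (nat \<Rightarrow> real) \<Rightarrow> ennreal" where
  "gfun Q N l a x w = ennreal (Q * w a * l (norm (x a))) /
     (ennreal N + (\<Sum>k. if k = a then 0 else ennreal (Q * w k * l (norm (x k)))))"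

definition tau :: "nat \<Rightarrow> nat \<Rightarrow> nat" where
  "tau a k = (if k = 0 then a else if k = a then 0 else k)"

lemma sinr_gfun:
  "sinr P N0 l H X i (Suc a) \<omega> = gfun (P i) (N0 i) (l i) a (\<lambda>k. X i (Suc k) \<omega>) (\<lambda>k. H i (Suc k) \<omega>)"
  unfolding sinr_def gfun_def by simp

lemma ennreal_div_mono2:
  fixes a b c d :: ennreal
  assumes "a \<le> b" "d \<le> c"
  shows "a / c \<le> b / d"
proof -
  have "inverse c \<le> inverse d" using assms(2)
    unfolding less_eq_ennreal.rep_eq inverse_ennreal.rep_eq
    by (rule ereal_inverse_antimono[rotated]) simp
  then show ?thesis unfolding divide_ennreal_def by (intro mult_mono assms) auto
qed

lemma gfun_swap:
  assumes w: "\<And>k. w k \<ge> 0" and Q: "Q > 0"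
    and lx: "l (norm (x a)) \<le> l (norm (x 0))"
  shows "gfun Q N l a x (\<lambda>k. w (tau a k)) \<le> gfun Q N l 0 x w"
proof (cases "a = 0")
  case True
  have "(\<lambda>k. w (tau a k)) = w" using True by (auto simp: tau_def fun_eq_iff)
  then show ?thesis using True by simp
next
  case a: False
  define c where "c = (\<lambda>k. ennreal (Q * w k * l (norm (x k))))"
  define r where "r = (\<lambda>k. if k = 0 \<or> k = a then 0 else c k)"
  have num: "ennreal (Q * w 0 * l (norm (x a))) \<le> ennreal (Q * w 0 * l (norm (x 0)))"
    using w[of 0] Q lx by (intro ennreal_leI mult_left_mono) auto
  have e1: "(\<lambda>k. if k = a then 0 else ennreal (Q * w (tau a k) * l (norm (x k))))
      = (\<lambda>k. (if k = 0 then ennreal (Q * w a * l (norm (x 0))) else 0) + r k)"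
    using a by (auto simp: tau_def r_def c_def fun_eq_iff)
  have e2: "(\<lambda>k. if k = 0 then 0 else ennreal (Q * w k * l (norm (x k))))
      = (\<lambda>k. (if k = a then c a else 0) + r k)"
    using a by (auto simp: r_def c_def fun_eq_iff)
  have s1: "(\<Sum>k. (if k = 0 then ennreal (Q * w a * l (norm (x 0))) else 0) + r k)
      = ennreal (Q * w a * l (norm (x 0))) + (\<Sum>k. r k)"
    by (subst suminf_add[symmetric]) (auto simp: sums_single[THEN sums_unique, symmetric])
  have s2: "(\<Sum>k. (if k = a then c a else 0) + r k) = c a + (\<Sum>k. r k)"
    by (subst suminf_add[symmetric]) (auto simp: sums_single[THEN sums_unique, symmetric])
  have ca: "c a \<le> ennreal (Q * w a * l (norm (x 0)))"
    unfolding c_def using w[of a] Q lx by (intro ennreal_leI mult_left_mono) auto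
  show ?thesis
    unfolding gfun_def using a
    apply (simp add: tau_def)
    apply (rule ennreal_div_mono2[OF num])
    using ca e1 e2 s1 s2 by (simp add: tau_def add_mono)
qed



lemma rce_le_from_int:
  fixes f g :: "'a \<Rightarrow> real"
  assumes M: "prob_space M" and sub: "subalgebra M F"
    and f: "integrable M f" and g: "integrable M g"
    and le: "\<And>A. A \<in> sets F \<Longrightarrow> (\<integral>x\<in>A. f x \<partial>M) \<le> (\<integral>x\<in>A. g x \<partial>M)"
  shows "AE x in M. real_cond_exp M F f x \<le> real_cond_exp M F g x"
proof -
  interpret prob_space M by fact
  interpret finite_measure_subalgebra M F by unfold_locales (fact sub)
  define h where "h x = real_cond_exp M F g x - real_cond_exp M F f x" for x
  have hF: "h \<in> borel_measurable F" unfolding h_def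
    by (intro borel_measurable_diff borel_measurable_cond_exp)
  have ih: "integrable M h" unfolding h_def
    using real_cond_exp_int(1)[OF f] real_cond_exp_int(1)[OF g] by auto
  have spF: "space F = space M" using sub by (simp add: subalgebra_def)
  define A where "A = {x\<in>space M. h x < 0}"
  have "{x\<in>space F. h x < 0} \<in> sets F" using hF unfolding borel_measurable_iff_less by blast
  then have AF: "A \<in> sets F" unfolding A_def using spF by simp
  have AM: "A \<in> sets M" using AF sub by (auto simp: subalgebra_def)
  have "(\<integral>x\<in>A. h x \<partial>M) = (\<integral>x\<in>A. real_cond_exp M F g x \<partial>M) - (\<integral>x\<in>A. real_cond_exp M F f x \<partial>M)"
    unfolding h_def
    by (rule set_integral_diff(2); unfold set_integrable_def;
        intro integrable_mult_indicator AM real_cond_exp_int(1) f g)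
  also have "\<dots> = (\<integral>x\<in>A. g x \<partial>M) - (\<integral>x\<in>A. f x \<partial>M)"
    using real_cond_exp_intA[OF f AF] real_cond_exp_intA[OF g AF] by simp
  finally have ge: "(\<integral>x\<in>A. h x \<partial>M) \<ge> 0" using le[OF AF] by simp
  have i2: "integrable M (\<lambda>x. indicator A x * (- h x))"
    using integrable_mult_indicator[OF AM integrable_minus[OF ih]] by simp
  have nn: "AE x in M. 0 \<le> indicator A x * (- h x)"
    by (auto simp: A_def indicator_def)
  have "(\<integral>x. indicator A x * (- h x) \<partial>M) = - (\<integral>x\<in>A. h x \<partial>M)"
    unfolding set_lebesgue_integral_def by (simp flip: integral_minus)
  moreover have "(\<integral>x. indicator A x * (- h x) \<partial>M) \<ge> 0"
    using integral_nonneg_AE[OF nn] .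
  ultimately have "(\<integral>x. indicator A x * (- h x) \<partial>M) = 0" using ge by linarith
  then have "AE x in M. indicator A x * (- h x) = 0"
    using integral_nonneg_eq_0_iff_AE[OF i2 nn] by simp
  then have "AE x in M. h x \<ge> 0" using AE_space
    by eventually_elim (auto simp: A_def indicator_def split: if_splits)
  then show ?thesis by eventually_elim (simp add: h_def)
qed



lemma indep_vars_reindex:
  assumes M: "prob_space M" and ind: "prob_space.indep_vars M M' X I"
    and inj: "inj_on h K" and sub: "h ` K \<subseteq> I"
  shows "prob_space.indep_vars M (\<lambda>k. M' (h k)) (\<lambda>k. X (h k)) K"
proof -
  interpret prob_space M by fact
  from ind have rv: "\<forall>i\<in>I. random_variable (M' i) (X i)"
    and ist: "indep_sets (\<lambda>i. {X i -` A \<inter> space M |A. A \<in> sets (M' i)}) I"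
    unfolding indep_vars_def2 by auto
  show ?thesis unfolding indep_vars_def2
  proof (intro conjI)
    show "\<forall>k\<in>K. random_variable (M' (h k)) (X (h k))" using rv sub by auto
    show "indep_sets (\<lambda>k. {X (h k) -` A \<inter> space M |A. A \<in> sets (M' (h k))}) K"
      unfolding indep_sets_def
    proof (intro conjI ballI allI impI)
      fix k assume "k \<in> K"
      then show "{X (h k) -` A \<inter> space M |A. A \<in> sets (M' (h k))} \<subseteq> events"
        using ist sub unfolding indep_sets_def by auto
    next
      fix L A assume L: "L \<subseteq> K" "L \<noteq> {}" "finite L"
        and A: "A \<in> (\<Pi> k\<in>L. {X (h k) -` A \<inter> space M |A. A \<in> sets (M' (h k))})"
      define A' where "A' m = A (the_inv_into L h m)" for m
      have injL: "inj_on h L" using inj L(1) by (rule inj_on_subset)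
      have A'h: "A' (h j) = A j" if "j \<in> L" for j
        unfolding A'_def using the_inv_into_f_f[OF injL that] by simp
      have "prob (\<Inter>m\<in>h ` L. A' m) = (\<Prod>m\<in>h ` L. prob (A' m))"
      proof (rule indep_setsD[OF ist])
        show "h ` L \<subseteq> I" using L sub by auto
        show "h ` L \<noteq> {}" "finite (h ` L)" using L by auto
        show "\<forall>m\<in>h ` L. A' m \<in> {X m -` A \<inter> space M |A. A \<in> sets (M' m)}"
          using A A'h by auto
      qed
      moreover have "(\<Inter>m\<in>h ` L. A' m) = (\<Inter>j\<in>L. A j)" using A'h by auto
      moreover have "(\<Prod>m\<in>h ` L. prob (A' m)) = (\<Prod>j\<in>L. prob (A j))"
        by (simp add: prod.reindex[OF injL] A'h)
      ultimately show "prob (\<Inter>j\<in>L. A j) = (\<Prod>j\<in>L. prob (A j))" by simp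
    qed
  qed
qed

lemma gfun_meas:
  assumes [measurable]: "l \<in> borel_measurable borel"
  shows "(\<lambda>(x,w). gfun Q N l a x w) \<in> borel_measurable (PiM (UNIV::nat set) (\<lambda>_. borel) \<Otimes>\<^sub>M PiM (UNIV::nat set) (\<lambda>_. borel))"
  unfolding gfun_def by measurable

lemma antimono_borel:
  fixes f :: "real \<Rightarrow> real"
  assumes "antimono f" shows "f \<in> borel_measurable borel"
proof -
  have "mono (\<lambda>x. - f x)" using assms by (auto simp: mono_def antimono_def)
  then have "(\<lambda>x. - f x) \<in> borel_measurable borel" by (rule borel_measurable_mono)
  then have "(\<lambda>x. - (- f x)) \<in> borel_measurable borel" by measurable
  then show ?thesis by simp
qed

lemma pair_distr_indep:
  assumes M: "prob_space M" and Zm: "Z \<in> M \<rightarrow>\<^sub>M A" and Vm: "V \<in> M \<rightarrow>\<^sub>M B"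
    and ind: "\<And>S T. S \<in> sets A \<Longrightarrow> T \<in> sets B \<Longrightarrow>
       measure M (Z -` S \<inter> space M \<inter> (V -` T \<inter> space M)) = measure M (Z -` S \<inter> space M) * measure M (V -` T \<inter> space M)"
  shows "distr M (A \<Otimes>\<^sub>M B) (\<lambda>\<omega>. (Z \<omega>, V \<omega>)) = distr M A Z \<Otimes>\<^sub>M distr M B V"
proof (rule pair_measure_eqI[symmetric])
  interpret prob_space M by fact
  interpret PA: prob_space "distr M A Z" by (rule prob_space_distr[OF Zm])
  interpret PB: prob_space "distr M B V" by (rule prob_space_distr[OF Vm])
  show "sigma_finite_measure (distr M A Z)" "sigma_finite_measure (distr M B V)"
    by unfold_locales
  show "sets (distr M A Z \<Otimes>\<^sub>M distr M B V) = sets (distr M (A \<Otimes>\<^sub>M B) (\<lambda>\<omega>. (Z \<omega>, V \<omega>)))"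
  proof -
    have "sets (distr M A Z \<Otimes>\<^sub>M distr M B V) = sets (A \<Otimes>\<^sub>M B)"
      by (intro sets_pair_measure_cong) simp_all
    then show ?thesis by simp
  qed
  fix S T assume S: "S \<in> sets (distr M A Z)" and T: "T \<in> sets (distr M B V)"
  then have S': "S \<in> sets A" and T': "T \<in> sets B" by auto
  have ZV: "(\<lambda>\<omega>. (Z \<omega>, V \<omega>)) \<in> M \<rightarrow>\<^sub>M A \<Otimes>\<^sub>M B" using Zm Vm by (rule measurable_Pair)
  have e1: "(\<lambda>\<omega>. (Z \<omega>, V \<omega>)) -` (S \<times> T) \<inter> space M = Z -` S \<inter> space M \<inter> (V -` T \<inter> space M)"
    by auto
  have "emeasure (distr M (A \<Otimes>\<^sub>M B) (\<lambda>\<omega>. (Z \<omega>, V \<omega>))) (S \<times> T)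
      = emeasure M (Z -` S \<inter> space M \<inter> (V -` T \<inter> space M))"
    using S' T' ZV by (simp add: emeasure_distr e1)
  also have "\<dots> = ennreal (measure M (Z -` S \<inter> space M) * measure M (V -` T \<inter> space M))"
    by (simp add: emeasure_eq_measure ind S' T')
  also have "\<dots> = emeasure (distr M A Z) S * emeasure (distr M B V) T"
    using S' T' Zm Vm by (simp add: emeasure_distr emeasure_eq_measure ennreal_mult)
  finally show "emeasure (distr M A Z) S * emeasure (distr M B V) T
      = emeasure (distr M (A \<Otimes>\<^sub>M B) (\<lambda>\<omega>. (Z \<omega>, V \<omega>))) (S \<times> T)" by simp
qed


theorem lemma2:
  fixes M :: "'a measure" and F :: "'a measure" and T :: nat
    and lam P N0 :: "nat \<Rightarrow> real" and l :: "nat \<Rightarrow> real \<Rightarrow> real"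
    and X :: "nat \<Rightarrow> nat \<Rightarrow> 'a \<Rightarrow> real^2" and H :: "nat \<Rightarrow> nat \<Rightarrow> 'a \<Rightarrow> real"
    and p :: "nat \<Rightarrow> ennreal \<Rightarrow> real"
  assumes M: "prob_space M" and T: "T \<ge> 1"
    and ppp: "\<forall>i<T. hom_PPP M (lam i) (X i)"
    and ppp_indep: "prob_space.indep_vars M (\<lambda>_. Pi\<^sub>M UNIV (\<lambda>_. borel)) (\<lambda>i \<omega>. \<lambda>k. X i (Suc k) \<omega>) {..<T}"
    and sorted: "\<forall>i<T. \<forall>\<omega>\<in>space M. \<forall>k\<ge>1. norm (X i k \<omega>) < norm (X i (Suc k) \<omega>)"
    and P: "\<forall>i<T. P i > 0" and N0: "\<forall>i<T. N0 i \<ge> 0"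
    and l_mono: "\<forall>i<T. antimono (l i)" and l_nonneg: "\<forall>i<T. \<forall>x. l i x \<ge> 0"
    and S_strict: "\<forall>i<T. \<forall>\<omega>\<in>space M. \<forall>k\<ge>1.
                      P i * l i (norm (X i (Suc k) \<omega>)) < P i * l i (norm (X i k \<omega>))"
    and H_nonneg: "\<forall>i<T. \<forall>j\<ge>1. \<forall>\<omega>\<in>space M. H i j \<omega> \<ge> 0"
    and H_indep: "prob_space.indep_vars M (\<lambda>_. borel) (\<lambda>(i, j). H i j) {(i, j). i < T \<and> 1 \<le> j}"
    and H_ident: "\<forall>a\<in>{(i, j). i < T \<and> 1 \<le> j}. \<forall>b\<in>{(i, j). i < T \<and> 1 \<le> j}.
                    distr M borel (case_prod H a) = distr M borel (case_prod H b)"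
    and H_ppp_indep: "prob_space.indep_set M (sets (point_sigma M T X)) (sets (fading_sigma M T H))"
    and p_mono: "\<forall>i<T. mono (p i)"
    and integrable: "\<forall>i<T. \<forall>j\<ge>1. integrable M (\<lambda>\<omega>. p i (sinr P N0 l H X i j \<omega>))"
    and F_sub: "subalgebra M F"
    and F_no_fading: "sets F \<subseteq> sets (point_sigma M T X)"
  shows "\<forall>i<T. AE \<omega> in M. \<forall>j\<ge>1.
           real_cond_exp M F (\<lambda>\<omega>. p i (sinr P N0 l H X i j \<omega>)) \<omega>
             \<le> real_cond_exp M F (\<lambda>\<omega>. p i (sinr P N0 l H X i 1 \<omega>)) \<omega>"
  proof (intro allI impI)
  fix i assume i: "i < T"
  interpret prob_space M by (rule M)
  define J where "J = {(a, k). a < T \<and> 1 \<le> (k::nat)}"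
  define PJ where "PJ = PiM J (\<lambda>_. borel :: (real^2) measure)"
  define PW where "PW = PiM (UNIV::nat set) (\<lambda>_. borel :: real measure)"
  define PX where "PX = PiM (UNIV::nat set) (\<lambda>_. borel :: (real^2) measure)"
  define Z where "Z = (\<lambda>\<omega>. \<lambda>ak\<in>J. X (fst ak) (snd ak) \<omega>)"
  define W where "W = (\<lambda>\<omega>. \<lambda>k. H i (Suc k) \<omega>)"
  define xs where "xs = (\<lambda>z::nat\<times>nat\<Rightarrow>real^2. \<lambda>k. z (i, Suc k))"
  define sw where "sw a = (\<lambda>w::nat\<Rightarrow>real. \<lambda>k. w (tau a k))" for a
  define f where "f j \<omega> = p i (sinr P N0 l H X i j \<omega>)" for j \<omega>
  have Xm: "X a k \<in> borel_measurable M" if "a < T" "1 \<le> k" for a k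
    using ppp that unfolding hom_PPP_def by auto
  have Hm: "H a k \<in> borel_measurable M" if "a < T" "1 \<le> k" for a k
  proof -
    have "\<forall>x\<in>{(i, j). i < T \<and> 1 \<le> j}. random_variable borel ((\<lambda>(i, j). H i j) x)"
      using H_indep unfolding indep_vars_def2 by auto
    then show ?thesis using that by auto
  qed
  have Zm: "Z \<in> M \<rightarrow>\<^sub>M PJ" unfolding Z_def PJ_def
    by (intro measurable_restrict) (auto simp: J_def intro: Xm)
  have Wm: "W \<in> M \<rightarrow>\<^sub>M PW"
  proof -
    have "(\<lambda>\<omega>. \<lambda>k\<in>UNIV. H i (Suc k) \<omega>) \<in> M \<rightarrow>\<^sub>M PW" unfolding PW_def
      by (intro measurable_restrict) (auto intro: Hm i)
    then show ?thesis by (simp add: W_def restrict_UNIV)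
  qed
  have xsm: "xs \<in> PJ \<rightarrow>\<^sub>M PX"
  proof -
    have "(\<lambda>z. \<lambda>k\<in>UNIV. z (i, Suc k)) \<in> PJ \<rightarrow>\<^sub>M PX" unfolding PX_def PJ_def
      by (intro measurable_restrict measurable_component_singleton) (auto simp: J_def i)
    then show ?thesis by (simp add: xs_def restrict_UNIV)
  qed
  have swm: "sw a \<in> PW \<rightarrow>\<^sub>M PW" for a
  proof -
    have "(\<lambda>w. \<lambda>k\<in>UNIV. w (tau a k)) \<in> PW \<rightarrow>\<^sub>M PW" unfolding PW_def
      by (intro measurable_restrict measurable_component_singleton) auto
    then show ?thesis by (simp add: sw_def restrict_UNIV)
  qed
  have lm: "l i \<in> borel_measurable borel" using l_mono i antimono_borel by blast
  have pm: "p i \<in> borel_measurable borel" using p_mono i mono_ennreal_borel by blast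
  have xsZ: "xs (Z \<omega>) = (\<lambda>k. X i (Suc k) \<omega>)" for \<omega>
    by (auto simp: xs_def Z_def J_def i)
  have fg: "f (Suc a) \<omega> = p i (gfun (P i) (N0 i) (l i) a (xs (Z \<omega>)) (W \<omega>))" for a \<omega>
    unfolding f_def xsZ W_def by (simp add: sinr_gfun)
  have Gps: "(\<Union>a\<in>{..<T}. \<Union>k\<in>{1..}. {X a k -` S \<inter> space M | S. S \<in> sets borel}) \<subseteq> Pow (space M)"
    by auto
  have sp_ps: "space (point_sigma M T X) = space M"
    unfolding point_sigma_def by (rule space_measure_of[OF Gps])
  have sets_ps: "sets (point_sigma M T X) = sigma_sets (space M) (\<Union>a\<in>{..<T}. \<Union>k\<in>{1..}. {X a k -` S \<inter> space M | S. S \<in> sets borel})"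
    unfolding point_sigma_def by (rule sets_measure_of[OF Gps])
  have Gfs: "(\<Union>a\<in>{..<T}. \<Union>k\<in>{1..}. {H a k -` S \<inter> space M | S. S \<in> sets borel}) \<subseteq> Pow (space M)"
    by auto
  have sp_fs: "space (fading_sigma M T H) = space M"
    unfolding fading_sigma_def by (rule space_measure_of[OF Gfs])
  have sets_fs: "sets (fading_sigma M T H) = sigma_sets (space M) (\<Union>a\<in>{..<T}. \<Union>k\<in>{1..}. {H a k -` S \<inter> space M | S. S \<in> sets borel})"
    unfolding fading_sigma_def by (rule sets_measure_of[OF Gfs])
  have Xps: "X a k \<in> point_sigma M T X \<rightarrow>\<^sub>M borel" if "a < T" "1 \<le> k" for a k
  proof (rule measurableI)
    fix S :: "(real^2) set" assume "S \<in> sets borel"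
    then have "X a k -` S \<inter> space M \<in> (\<Union>a\<in>{..<T}. \<Union>k\<in>{1..}. {X a k -` S \<inter> space M | S. S \<in> sets borel})"
      using that by blast
    then show "X a k -` S \<inter> space (point_sigma M T X) \<in> sets (point_sigma M T X)"
      unfolding sp_ps sets_ps by (rule sigma_sets.Basic)
  qed auto
  have Hfs: "H a k \<in> fading_sigma M T H \<rightarrow>\<^sub>M borel" if "a < T" "1 \<le> k" for a k
  proof (rule measurableI)
    fix S :: "real set" assume "S \<in> sets borel"
    then have "H a k -` S \<inter> space M \<in> (\<Union>a\<in>{..<T}. \<Union>k\<in>{1..}. {H a k -` S \<inter> space M | S. S \<in> sets borel})"
      using that by blast
    then show "H a k -` S \<inter> space (fading_sigma M T H) \<in> sets (fading_sigma M T H)"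
      unfolding sp_fs sets_fs by (rule sigma_sets.Basic)
  qed auto
  have Zps: "Z \<in> point_sigma M T X \<rightarrow>\<^sub>M PJ" unfolding Z_def PJ_def
    by (intro measurable_restrict) (auto simp: J_def intro: Xps)
  have Wfs: "W \<in> fading_sigma M T H \<rightarrow>\<^sub>M PW"
  proof -
    have "(\<lambda>\<omega>. \<lambda>k\<in>UNIV. H i (Suc k) \<omega>) \<in> fading_sigma M T H \<rightarrow>\<^sub>M PW" unfolding PW_def
      by (intro measurable_restrict) (auto intro: Hfs i)
    then show ?thesis by (simp add: W_def restrict_UNIV)
  qed
  have Fpre: "\<exists>B\<in>sets PJ. A = Z -` B \<inter> space M" if A: "A \<in> sets F" for A
  proof -
    have Zsp: "Z \<in> space M \<rightarrow> space PJ" using Zm by (rule measurable_space[THEN funcsetI[rotated]]) 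
    have "sets (point_sigma M T X) \<subseteq> sets (vimage_algebra (space M) Z PJ)"
      unfolding sets_ps
    proof (subst sigma_sets_le_sets_iff[of "vimage_algebra (space M) Z PJ", simplified space_vimage_algebra])
      show "(\<Union>a\<in>{..<T}. \<Union>k\<in>{1..}. {X a k -` S \<inter> space M | S. S \<in> sets borel}) \<subseteq> sets (vimage_algebra (space M) Z PJ)"
      proof (intro subsetI)
        fix x assume "x \<in> (\<Union>a\<in>{..<T}. \<Union>k\<in>{1..}. {X a k -` S \<inter> space M | S. S \<in> sets borel})"
        then obtain a k :: nat and S :: "(real^2) set" where ak: "a \<in> {..<T}" "k \<in> {1..}"
          and S: "S \<in> sets borel" and x: "x = X a k -` S \<inter> space M" by blast
        define S' where "S' = (\<lambda>z. z (a, k)) -` S \<inter> space PJ"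
        have akJ: "(a, k) \<in> J" using ak by (auto simp: J_def)
        have "S' \<in> sets PJ" unfolding S'_def PJ_def
          using measurable_sets[OF measurable_component_singleton[OF akJ] S] by simp
        moreover have "X a k -` S \<inter> space M = Z -` S' \<inter> space M"
          using Zsp ak by (auto simp: S'_def Z_def J_def)
        ultimately show "x \<in> sets (vimage_algebra (space M) Z PJ)"
          unfolding sets_vimage_algebra2[OF Zsp] x by blast
      qed
    qed
    then have "A \<in> sets (vimage_algebra (space M) Z PJ)" using A F_no_fading by blast
    then show ?thesis unfolding sets_vimage_algebra2[OF Zsp] by blast
  qed
  have indfac: "measure M (Z -` S \<inter> space M \<inter> (V -` U \<inter> space M)) = measure M (Z -` S \<inter> space M) * measure M (V -` U \<inter> space M)"
    if V: "V \<in> fading_sigma M T H \<rightarrow>\<^sub>M PW" and S: "S \<in> sets PJ" and U: "U \<in> sets PW" for V S U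
  proof (rule indep_setD[OF H_ppp_indep])
    show "Z -` S \<inter> space M \<in> sets (point_sigma M T X)"
      using measurable_sets[OF Zps S] unfolding sp_ps .
    show "V -` U \<inter> space M \<in> sets (fading_sigma M T H)"
      using measurable_sets[OF V U] unfolding sp_fs .
  qed
  define D where "D = distr M borel (H i 1)"
  have marg: "distr M borel (H i (Suc k)) = D" for k
    using H_ident i unfolding D_def by fastforce
  have dist_fam: "distr M PW (\<lambda>\<omega>. \<lambda>k. H i (Suc (g k)) \<omega>) = PiM UNIV (\<lambda>_. D)"
    if g: "inj g" for g :: "nat \<Rightarrow> nat"
  proof -
    have inj: "inj_on (\<lambda>k. (i, Suc (g k))) UNIV" using g by (auto simp: inj_on_def)
    have "indep_vars (\<lambda>k. borel) (\<lambda>k. (\<lambda>(i, j). H i j) (i, Suc (g k))) UNIV"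
      by (rule indep_vars_reindex[OF M H_indep inj]) (auto simp: i)
    then have ind: "indep_vars (\<lambda>k. borel) (\<lambda>k \<omega>. H i (Suc (g k)) \<omega>) UNIV" by simp
    have "distr M (PiM UNIV (\<lambda>k. borel)) (\<lambda>x. \<lambda>k\<in>UNIV. H i (Suc (g k)) x)
        = PiM UNIV (\<lambda>k. distr M borel (H i (Suc (g k))))"
      using ind by (subst (asm) indep_vars_iff_distr_eq_PiM) (auto intro: Hm i)
    then show ?thesis by (simp add: marg PW_def restrict_UNIV)
  qed
  have dW: "distr M PW (\<lambda>\<omega>. sw a (W \<omega>)) = distr M PW W" for a
  proof -
    have "inj (tau a)" by (auto simp: inj_on_def tau_def split: if_splits)
    from dist_fam[OF this] dist_fam[of id] show ?thesis
      by (simp add: sw_def W_def)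
  qed
  have lchain: "P i * l i (norm (X i (Suc a) \<omega>)) \<le> P i * l i (norm (X i 1 \<omega>))"
    if w: "\<omega> \<in> space M" for a \<omega>
  proof (induction a)
    case 0 then show ?case by simp
  next
    case (Suc a)
    have "P i * l i (norm (X i (Suc (Suc a)) \<omega>)) < P i * l i (norm (X i (Suc a) \<omega>))"
      using S_strict i w by auto
    then show ?case using Suc by linarith
  qed
  have lx: "l i (norm (X i (Suc a) \<omega>)) \<le> l i (norm (X i (Suc 0) \<omega>))"
    if w: "\<omega> \<in> space M" for a \<omega>
    using lchain[OF w, of a] P i by (simp add: mult_le_cancel_left_pos)
  have key: "(\<integral>\<omega>\<in>A. f (Suc a) \<omega> \<partial>M) \<le> (\<integral>\<omega>\<in>A. f 1 \<omega> \<partial>M)" if A: "A \<in> sets F" for A a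
  proof -
    obtain B where B: "B \<in> sets PJ" and AB: "A = Z -` B \<inter> space M" using Fpre[OF A] by blast
    have AM: "A \<in> sets M" using A F_sub by (auto simp: subalgebra_def)
    define \<Phi> where "\<Phi> b = (\<lambda>(z, w). indicator B z * p i (gfun (P i) (N0 i) (l i) b (xs z) w))" for b
    have \<Phi>m: "\<Phi> b \<in> borel_measurable (PJ \<Otimes>\<^sub>M PW)" for b
    proof -
      have g: "(\<lambda>(x, w). gfun (P i) (N0 i) (l i) b x w) \<in> borel_measurable (PX \<Otimes>\<^sub>M PW)"
        using gfun_meas[OF lm] unfolding PX_def PW_def .
      have "(\<lambda>(z, w). (xs z, w)) \<in> PJ \<Otimes>\<^sub>M PW \<rightarrow>\<^sub>M PX \<Otimes>\<^sub>M PW"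
        using xsm by measurable
      from measurable_compose[OF this g]
      have g2: "(\<lambda>zw. gfun (P i) (N0 i) (l i) b (xs (fst zw)) (snd zw)) \<in> borel_measurable (PJ \<Otimes>\<^sub>M PW)"
        by (simp add: case_prod_beta)
      have g3: "(\<lambda>zw. p i (gfun (P i) (N0 i) (l i) b (xs (fst zw)) (snd zw))) \<in> borel_measurable (PJ \<Otimes>\<^sub>M PW)"
        using measurable_compose[OF g2 pm] .
      have g4: "(\<lambda>zw. indicator B (fst zw) :: real) \<in> borel_measurable (PJ \<Otimes>\<^sub>M PW)"
        by (rule measurable_compose[OF measurable_fst borel_measurable_indicator[OF B]])
      have "(\<lambda>zw. indicator B (fst zw) * p i (gfun (P i) (N0 i) (l i) b (xs (fst zw)) (snd zw))) \<in> borel_measurable (PJ \<Otimes>\<^sub>M PW)"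
        using g3 g4 by (rule borel_measurable_times[rotated])
      then show ?thesis unfolding \<Phi>_def by (simp add: case_prod_beta)
    qed
    have ZWm: "(\<lambda>\<omega>. (Z \<omega>, W \<omega>)) \<in> M \<rightarrow>\<^sub>M PJ \<Otimes>\<^sub>M PW" using Zm Wm by (rule measurable_Pair)
    have swWm: "(\<lambda>\<omega>. sw a (W \<omega>)) \<in> M \<rightarrow>\<^sub>M PW" using measurable_compose[OF Wm swm] .
    have ZW'm: "(\<lambda>\<omega>. (Z \<omega>, sw a (W \<omega>))) \<in> M \<rightarrow>\<^sub>M PJ \<Otimes>\<^sub>M PW" using Zm swWm by (rule measurable_Pair)
    have swWf: "(\<lambda>\<omega>. sw a (W \<omega>)) \<in> fading_sigma M T H \<rightarrow>\<^sub>M PW" using measurable_compose[OF Wfs swm] .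
    have dd: "distr M (PJ \<Otimes>\<^sub>M PW) (\<lambda>\<omega>. (Z \<omega>, sw a (W \<omega>))) = distr M (PJ \<Otimes>\<^sub>M PW) (\<lambda>\<omega>. (Z \<omega>, W \<omega>))"
    proof -
      have "distr M (PJ \<Otimes>\<^sub>M PW) (\<lambda>\<omega>. (Z \<omega>, sw a (W \<omega>))) = distr M PJ Z \<Otimes>\<^sub>M distr M PW (\<lambda>\<omega>. sw a (W \<omega>))"
        by (rule pair_distr_indep[OF M Zm swWm indfac[OF swWf]])
      also have "\<dots> = distr M PJ Z \<Otimes>\<^sub>M distr M PW W" by (simp add: dW)
      also have "\<dots> = distr M (PJ \<Otimes>\<^sub>M PW) (\<lambda>\<omega>. (Z \<omega>, W \<omega>))"
        by (rule pair_distr_indep[OF M Zm Wm indfac[OF Wfs], symmetric])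
      finally show ?thesis .
    qed
    have e1: "indicator A \<omega> * f (Suc b) \<omega> = \<Phi> b (Z \<omega>, W \<omega>)" if "\<omega> \<in> space M" for \<omega> b
      using that by (simp add: \<Phi>_def fg AB indicator_def)
    have sA: "(\<integral>\<omega>\<in>A. f (Suc b) \<omega> \<partial>M) = (\<integral>\<omega>. \<Phi> b (Z \<omega>, W \<omega>) \<partial>M)" for b
      unfolding set_lebesgue_integral_def by (intro Bochner_Integration.integral_cong) (auto simp: e1)
    have iA: "integrable M (\<lambda>\<omega>. \<Phi> b (Z \<omega>, W \<omega>))" for b
    proof -
      have "integrable M (f (Suc b))" using integrable i by (auto simp: f_def[abs_def])
      from integrable_mult_indicator[OF AM this]
      have "integrable M (\<lambda>\<omega>. indicator A \<omega> * f (Suc b) \<omega>)" by simp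
      moreover have "integrable M (\<lambda>\<omega>. indicator A \<omega> * f (Suc b) \<omega>) = integrable M (\<lambda>\<omega>. \<Phi> b (Z \<omega>, W \<omega>))"
        by (intro Bochner_Integration.integrable_cong) (auto simp: e1)
      ultimately show ?thesis by simp
    qed
    have i2: "integrable M (\<lambda>\<omega>. \<Phi> a (Z \<omega>, sw a (W \<omega>)))"
    proof -
      have "integrable (distr M (PJ \<Otimes>\<^sub>M PW) (\<lambda>\<omega>. (Z \<omega>, W \<omega>))) (\<Phi> a)"
        using iA[of a] integrable_distr_eq[OF ZWm \<Phi>m] by simp
      then have "integrable (distr M (PJ \<Otimes>\<^sub>M PW) (\<lambda>\<omega>. (Z \<omega>, sw a (W \<omega>)))) (\<Phi> a)"
        by (simp add: dd)
      then show ?thesis using integrable_distr_eq[OF ZW'm \<Phi>m] by simp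
    qed
    have pw: "\<Phi> a (Z \<omega>, sw a (W \<omega>)) \<le> \<Phi> 0 (Z \<omega>, W \<omega>)" if w: "\<omega> \<in> space M" for \<omega>
    proof -
      have "gfun (P i) (N0 i) (l i) a (xs (Z \<omega>)) (\<lambda>k. W \<omega> (tau a k)) \<le> gfun (P i) (N0 i) (l i) 0 (xs (Z \<omega>)) (W \<omega>)"
        by (rule gfun_swap) (use H_nonneg P i w lx[OF w] in \<open>auto simp: W_def xsZ\<close>)
      then have "p i (gfun (P i) (N0 i) (l i) a (xs (Z \<omega>)) (sw a (W \<omega>))) \<le> p i (gfun (P i) (N0 i) (l i) 0 (xs (Z \<omega>)) (W \<omega>))"
        using p_mono i by (auto simp: sw_def mono_def)
      then show ?thesis unfolding \<Phi>_def by (auto intro: mult_left_mono simp: indicator_def)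
    qed
    have "(\<integral>\<omega>\<in>A. f (Suc a) \<omega> \<partial>M) = (\<integral>\<omega>. \<Phi> a (Z \<omega>, W \<omega>) \<partial>M)" by (rule sA)
    also have "\<dots> = integral\<^sup>L (distr M (PJ \<Otimes>\<^sub>M PW) (\<lambda>\<omega>. (Z \<omega>, W \<omega>))) (\<Phi> a)"
      by (rule integral_distr[OF ZWm \<Phi>m, symmetric])
    also have "\<dots> = integral\<^sup>L (distr M (PJ \<Otimes>\<^sub>M PW) (\<lambda>\<omega>. (Z \<omega>, sw a (W \<omega>)))) (\<Phi> a)"
      by (simp add: dd)
    also have "\<dots> = (\<integral>\<omega>. \<Phi> a (Z \<omega>, sw a (W \<omega>)) \<partial>M)"
      by (rule integral_distr[OF ZW'm \<Phi>m])
    also have "\<dots> \<le> (\<integral>\<omega>. \<Phi> 0 (Z \<omega>, W \<omega>) \<partial>M)"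
      by (rule integral_mono[OF i2 iA pw])
    also have "\<dots> = (\<integral>\<omega>\<in>A. f 1 \<omega> \<partial>M)" using sA[of 0] by simp
    finally show ?thesis .
  qed
  have "AE \<omega> in M. real_cond_exp M F (f j) \<omega> \<le> real_cond_exp M F (f 1) \<omega>" if j: "j \<ge> 1" for j
  proof -
    obtain a where a: "j = Suc a" using j by (cases j) auto
    show ?thesis unfolding a
      by (rule rce_le_from_int[OF M F_sub _ _ key])
         (use integrable i a j in \<open>auto simp: f_def[abs_def]\<close>)
  qed
  then have "\<forall>j. AE \<omega> in M. j \<ge> 1 \<longrightarrow> real_cond_exp M F (f j) \<omega> \<le> real_cond_exp M F (f 1) \<omega>"
    by auto
  then show "AE \<omega> in M. \<forall>j\<ge>1. real_cond_exp M F (\<lambda>\<omega>. p i (sinr P N0 l H X i j \<omega>)) \<omega>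
             \<le> real_cond_exp M F (\<lambda>\<omega>. p i (sinr P N0 l H X i 1 \<omega>)) \<omega>"
    unfolding AE_all_countable[symmetric] f_def[abs_def] by simp
qed
end
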